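(* Let $q$ be an odd prime power and $n=q^2+1$. For an integer $a$ with $1\le a\le n-1$, $a\in\mathrm{MinRep}_n$ if and only if either $a=\frac{q^2+1}{2}$ or $a\in[l(q+1)+1,(l+1)(q-1)]$ for some integer $l$ with $0\le l\le\frac{q-3}{2}$. Moreover, $|C_{(q^2+1)/2}|=1$ and $|C_a|=4$ for every $a\in\mathrm{MinRep}_n\setminus\{0,\frac{q^2+1}{2}\}$.
   Context: For $0\le s\le n-1$, $C_s=\{sq^i\bmod n:i\ge0\}$ is the $q$-cyclotomic coset of $s$ modulo $n$; its least element is its coset leader; $\mathrm{MinRep}_n$ is the set of all coset leaders modulo $n$. $[u,v]$ denotes the set of integers $u,u+1,\dots,v$. *)

theory Defs
  imports "HOL-Computational_Algebra.Primes"
begin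

definition cyc_coset :: "nat \<Rightarrow> nat \<Rightarrow> nat \<Rightarrow> nat set" where
  "cyc_coset q n s = {s * q ^ i mod n | i. True}"

definition MinRep :: "nat \<Rightarrow> nat \<Rightarrow> nat set" where
  "MinRep q n = {s. s < n \<and> s = Min (cyc_coset q n s)}"

end

theory Submission
  imports Defs
begin

lemma sq_mod:
  fixes q n c :: nat
  assumes "n = q^2 + 1" "0 < c" "c < n"
  shows "c * q^2 mod n = n - c"
proof -
  have "c * q^2 = (c - 1) * n + (n - c)"
    using assms by (cases c) (auto simp: algebra_simps)
  moreover have "n - c < n" using assms by simp
  ultimately show ?thesis by (metis mod_mult_self3 mod_less)
qed

lemma q4_mod:
  fixes q n :: nat
  assumes "n = q^2 + 1" "q \<ge> 1"
  shows "q^4 mod n = 1"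
proof -
  have "q^4 = (n - 1) * q^2" using assms by (simp add: power_mult_distrib flip: power_add)
  then show ?thesis using sq_mod[of n q "n-1"] assms by simp
qed

lemma shift_mod:
  fixes q n a i :: nat
  assumes "n = q^2 + 1" "q \<ge> 1"
  shows "a * q^i mod n = a * q^(i mod 4) mod n"
proof -
  have "q^i = q^(i mod 4) * (q^4)^(i div 4)"
    by (metis power_add power_mult mod_div_mult_eq mult.commute)
  have p: "(q^4)^(i div 4) mod n = 1"
  proof -
    have "n > 1" using assms by simp
    have "(q^4)^(i div 4) mod n = ((q^4) mod n)^(i div 4) mod n" by (simp add: power_mod)
    also have "\<dots> = 1" using q4_mod[OF assms] \<open>n > 1\<close> by simp
    finally show ?thesis .
  qed
  have "a * q^i mod n = (a * q^(i mod 4)) * ((q^4)^(i div 4) mod n) mod n"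
    unfolding \<open>q^i = _\<close> mult.assoc[symmetric] by (rule mod_mult_right_eq[symmetric])
  then show ?thesis using p by simp
qed

lemma cop: fixes q :: nat shows "coprime (q^2 + 1) q"
proof -
  have "gcd q (q * q + 1) = 1" using gcd_add_mult[of q q 1] by simp
  then show ?thesis by (simp add: power2_eq_square coprime_iff_gcd_eq_1 gcd.commute)
qed

lemma b_pos:
  fixes q n a :: nat
  assumes "n = q^2 + 1" "0 < a" "a < n"
  shows "0 < a * q mod n"
proof (rule ccontr)
  assume "\<not> 0 < a * q mod n"
  then have "n dvd a * q" by auto
  then have "n dvd a" using cop[of q] assms(1) by (simp add: coprime_dvd_mult_left_iff)
  then show False using assms by (auto dest: dvd_imp_le)
qed

lemma coset_eq:
  fixes q n a :: nat
  assumes "n = q^2 + 1" "q \<ge> 1" "0 < a" "a < n"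
  shows "cyc_coset q n a = {a, a * q mod n, n - a, n - a * q mod n}"
proof -
  have b: "0 < a * q mod n" "a * q mod n < n" using b_pos[OF assms(1,3,4)] assms by auto
  have e0: "a * q^0 mod n = a" using assms by simp
  have e1: "a * q^1 mod n = a * q mod n" by simp
  have e2: "a * q^2 mod n = n - a" using sq_mod[OF assms(1,3,4)] .
  have e3: "a * q^3 mod n = n - a * q mod n"
  proof -
    have "a * q^3 mod n = (a * q) * q^2 mod n" by (simp add: power3_eq_cube power2_eq_square ac_simps)
    also have "\<dots> = (a * q mod n) * q^2 mod n" by (simp add: mod_mult_left_eq)
    also have "\<dots> = n - a * q mod n" using sq_mod[OF assms(1) b] .
    finally show ?thesis .
  qed
  show ?thesis
  proof
    show "cyc_coset q n a \<subseteq> {a, a * q mod n, n - a, n - a * q mod n}"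
    proof
      fix z assume "z \<in> cyc_coset q n a"
      then obtain i where z: "z = a * q^i mod n" unfolding cyc_coset_def by auto
      then have z': "z = a * q^(i mod 4) mod n" using shift_mod[OF assms(1,2)] by simp
      have "i mod 4 = 0 \<or> i mod 4 = 1 \<or> i mod 4 = 2 \<or> i mod 4 = 3" by arith
      then show "z \<in> {a, a * q mod n, n - a, n - a * q mod n}"
        using z' e0 e1 e2 e3 by (elim disjE) auto
    qed
  next
    show "{a, a * q mod n, n - a, n - a * q mod n} \<subseteq> cyc_coset q n a"
    proof -
      have mem: "\<And>i. a * q^i mod n \<in> cyc_coset q n a" unfolding cyc_coset_def by auto
      show ?thesis using mem[of 0] mem[of 1] mem[of 2] mem[of 3] unfolding e0 e1 e2 e3 by auto
    qed
  qed
qed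

lemma m_fix:
  fixes q n m :: nat
  assumes "n = q^2 + 1" "odd q" "m = n div 2"
  shows "m * q mod n = m" "2 * m = n"
proof -
  obtain k where k: "q = 2 * k + 1" using assms(2) oddE by blast
  have n2: "2 * m = n" using assms k by (simp add: power2_eq_square algebra_simps)
  then show "2 * m = n" .
  have "m * q = m + k * n" using k n2 by (simp add: algebra_simps)
  moreover have "m < n" using n2 assms k by simp
  ultimately show "m * q mod n = m" by simp
qed

lemma b_formula:
  fixes q n a x y :: nat
  assumes "n = q^2 + 1" "a = x * q + y" "1 \<le> y" "y < q" "a < n"
  shows "a * q mod n = y * q - x" "x < q"
proof -
  show xq: "x < q"
  proof (rule ccontr)
    assume "\<not> x < q"
    then have "q * q \<le> x * q" using mult_le_mono1[of q x q] by simp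
    then show False using assms unfolding power2_eq_square by linarith
  qed
  have "q \<le> y * q" using assms by simp
  then have xle: "x \<le> y * q" using xq by linarith
  have "y * q \<le> (q - 1) * q" using assms by (intro mult_right_mono) auto
  also have "\<dots> = q * q - q" by (simp add: diff_mult_distrib)
  finally have lt: "y * q - x < n" using assms by (simp add: power2_eq_square)
  have "a * q = x * n + (y * q - x)" using assms xle by (simp add: power2_eq_square algebra_simps)
  then show "a * q mod n = y * q - x" using lt by simp
qed

lemma b_zero:
  fixes q n a x :: nat
  assumes "n = q^2 + 1" "a = x * q" "0 < a" "a < n"
  shows "a * q mod n = n - x"
proof -
  have "0 < x" "0 < q" using assms by simp_all
  then have "x \<le> x * q" by simp
  then have "x < n" using assms by linarith
  have "a * q = x * q^2" using assms by (simp add: power2_eq_square ac_simps)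
  then show ?thesis using sq_mod[of n q x] assms \<open>0 < x\<close> \<open>x < n\<close> by metis
qed

lemma arith_char:
  fixes q x y :: nat
  assumes "odd q" "q \<ge> 3" "1 \<le> y" "y < q" "x < q" "2 * (x * q + y) \<noteq> q * q + 1"
  shows "(x * q + y \<le> y * q - x \<and> x * q + y + (y * q - x) \<le> q * q + 1 \<and> 2 * (x * q + y) \<le> q * q + 1)
     \<longleftrightarrow> (2 * x + 3 \<le> q \<and> x + 1 \<le> y \<and> y + x + 1 \<le> q)"
proof
  assume H: "x * q + y \<le> y * q - x \<and> x * q + y + (y * q - x) \<le> q * q + 1 \<and> 2 * (x * q + y) \<le> q * q + 1"
  have xle: "x \<le> y * q" using assms by (metis le_trans less_imp_le_nat mult_1 mult_le_mono1)
  have C1: "x * q + y + x \<le> y * q" using H xle by linarith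
  have C2: "x * q + y + y * q \<le> q * q + 1 + x" using H xle by linarith
  have C3: "2 * (x * q + y) \<le> q * q + 1" using H by linarith
  have yx: "x + 1 \<le> y"
  proof (rule ccontr)
    assume "\<not> x + 1 \<le> y"
    then have "y * q \<le> x * q" by (simp add: mult_right_mono)
    then show False using C1 assms by linarith
  qed
  have "(x + 1) * q \<le> y * q" using yx mult_le_mono1 by blast
  have x2: "2 * x \<le> q"
  proof (rule ccontr)
    assume "\<not> 2 * x \<le> q"
    then have "(q + 1) * q \<le> (2 * x) * q" by (intro mult_right_mono) auto
    then show False using C3 yx by (simp add: algebra_simps)
  qed
  have x3: "2 * x + 3 \<le> q"
  proof (rule ccontr)
    assume "\<not> 2 * x + 3 \<le> q"
    then have q1: "q = 2 * x + 1" using x2 assms(1) by presburger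
    have "2 * y \<le> q + 1" using C3 unfolding q1 by (simp add: algebra_simps)
    then have "2 * y = q + 1" using yx q1 by linarith
    then have "2 * (x * q + y) = q * q + 1" using q1 by (simp add: algebra_simps)
    then show False using assms by simp
  qed
  have y3: "y + x + 1 \<le> q"
  proof (rule ccontr)
    assume "\<not> y + x + 1 \<le> q"
    then have "q * q \<le> (y + x) * q" by (intro mult_right_mono) auto
    then have "q * q \<le> y * q + x * q" by (simp add: algebra_simps)
    then show False using C2 x3 \<open>\<not> y + x + 1 \<le> q\<close> by linarith
  qed
  show "2 * x + 3 \<le> q \<and> x + 1 \<le> y \<and> y + x + 1 \<le> q" using x3 yx y3 by simp
next
  assume H: "2 * x + 3 \<le> q \<and> x + 1 \<le> y \<and> y + x + 1 \<le> q"
  have p1: "(x + 1) * q \<le> y * q" using H mult_le_mono1 by blast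
  have p2: "(y + x + 1) * q \<le> q * q" using H mult_le_mono1 by blast
  have p1': "x * q + q \<le> y * q" using p1 by (simp add: algebra_simps)
  have xle: "x \<le> y * q" using p1' H by linarith
  have C1: "x * q + y + x \<le> y * q" using p1 H by (simp add: algebra_simps)
  have C2: "x * q + y + y * q \<le> q * q + 1 + x" using p2 H by (simp add: algebra_simps)
  have C3: "2 * (x * q + y) \<le> q * q + 1" using p1 p2 H by (simp add: algebra_simps)
  show "x * q + y \<le> y * q - x \<and> x * q + y + (y * q - x) \<le> q * q + 1 \<and> 2 * (x * q + y) \<le> q * q + 1"
    using C1 C2 C3 xle by linarith
qed

lemma leader_iff:
  fixes q n a :: nat
  assumes "n = q^2 + 1" "q \<ge> 1" "0 < a" "a < n"
  shows "a \<in> MinRep q n \<longleftrightarrow> (a \<le> a * q mod n \<and> a \<le> n - a \<and> a \<le> n - a * q mod n)"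
proof -
  have c: "cyc_coset q n a = {a, a * q mod n, n - a, n - a * q mod n}" using coset_eq[OF assms] .
  have "a \<in> MinRep q n \<longleftrightarrow> a = Min {a, a * q mod n, n - a, n - a * q mod n}"
    using assms(4) by (simp add: MinRep_def c)
  also have "\<dots> \<longleftrightarrow> (a \<le> a * q mod n \<and> a \<le> n - a \<and> a \<le> n - a * q mod n)"
    by (auto simp: min_def)
  finally show ?thesis .
qed

lemma char:
  fixes q n a :: nat
  assumes "odd q" "q \<ge> 3" "n = q^2 + 1" "0 < a" "a < n" "2 * a \<noteq> n"
  shows "a \<in> MinRep q n \<longleftrightarrow>
    (1 \<le> a mod q \<and> 2 * (a div q) + 3 \<le> q \<and> a div q + 1 \<le> a mod q \<and> a mod q + a div q + 1 \<le> q)"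
proof -
  define x where "x = a div q"
  define y where "y = a mod q"
  have a: "a = x * q + y" unfolding x_def y_def by simp
  have yq: "y < q" unfolding y_def using assms by simp
  have L: "a \<in> MinRep q n \<longleftrightarrow> (a \<le> a * q mod n \<and> a \<le> n - a \<and> a \<le> n - a * q mod n)"
    using leader_iff[of n q a] assms by simp
  show ?thesis
  proof (cases "y = 0")
    case True
    then have ax: "a = x * q" using a by simp
    then have "0 < x" using assms by (cases x) auto
    then have "x < a" using ax assms by simp
    then have "\<not> a \<in> MinRep q n" using L b_zero[OF assms(3) ax assms(4,5)] by simp
    then show ?thesis using True unfolding y_def by simp
  next
    case False
    then have y1: "1 \<le> y" by simp
    have bf: "a * q mod n = y * q - x" "x < q" using b_formula[OF assms(3) a y1 yq assms(5)] by auto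
    have bl: "y * q - x < n" using bf assms by (metis mod_less_divisor zero_less_Suc add.commute Suc_eq_plus1)
    have n': "n = q * q + 1" using assms by (simp add: power2_eq_square)
    have "a \<in> MinRep q n \<longleftrightarrow> (x * q + y \<le> y * q - x \<and> x * q + y + (y * q - x) \<le> q * q + 1 \<and> 2 * (x * q + y) \<le> q * q + 1)"
      unfolding L bf(1) using bl n' a by auto
    also have "\<dots> \<longleftrightarrow> (2 * x + 3 \<le> q \<and> x + 1 \<le> y \<and> y + x + 1 \<le> q)"
      using arith_char[of q y x] assms y1 yq bf(2) a n' by simp
    finally show ?thesis using y1 unfolding x_def y_def by simp
  qed
qed

lemma interval_iff:
  fixes q a :: nat
  assumes "odd q" "q \<ge> 3"
  shows "(\<exists>l::nat. l \<le> (q - 3) div 2 \<and> l * (q + 1) + 1 \<le> a \<and> a \<le> (l + 1) * (q - 1)) \<longleftrightarrow>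
    (1 \<le> a mod q \<and> 2 * (a div q) + 3 \<le> q \<and> a div q + 1 \<le> a mod q \<and> a mod q + a div q + 1 \<le> q)"
proof
  assume "\<exists>l::nat. l \<le> (q - 3) div 2 \<and> l * (q + 1) + 1 \<le> a \<and> a \<le> (l + 1) * (q - 1)"
  then obtain l where l: "l \<le> (q - 3) div 2" "l * (q + 1) + 1 \<le> a" "a \<le> (l + 1) * (q - 1)" by blast
  have e1: "l * (q + 1) = l * q + l" by (simp add: algebra_simps)
  have e2: "(l + 1) * (q - 1) + (l + 1) = l * q + q" using assms
    by (cases q) (auto simp: algebra_simps)
  have l2: "2 * l + 3 \<le> q" using l(1) assms by presburger
  define y where "y = a - l * q"
  have a: "a = l * q + y" "l + 1 \<le> y" "y + l + 1 \<le> q" using l e1 e2 unfolding y_def by linarith+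
  then have "y < q" by simp
  then have "a div q = l" "a mod q = y" using a(1) by simp_all
  then show "1 \<le> a mod q \<and> 2 * (a div q) + 3 \<le> q \<and> a div q + 1 \<le> a mod q \<and> a mod q + a div q + 1 \<le> q"
    using a l2 by simp
next
  assume H: "1 \<le> a mod q \<and> 2 * (a div q) + 3 \<le> q \<and> a div q + 1 \<le> a mod q \<and> a mod q + a div q + 1 \<le> q"
  define x where "x = a div q"
  define y where "y = a mod q"
  have a: "a = x * q + y" unfolding x_def y_def by simp
  have H': "2 * x + 3 \<le> q" "x + 1 \<le> y" "y + x + 1 \<le> q" using H unfolding x_def y_def by auto
  have e1: "x * (q + 1) = x * q + x" by (simp add: algebra_simps)
  have e2: "(x + 1) * (q - 1) + (x + 1) = x * q + q" using assms
    by (cases q) (auto simp: algebra_simps)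
  have "x \<le> (q - 3) div 2" using H' by linarith
  moreover have "x * (q + 1) + 1 \<le> a" "a \<le> (x + 1) * (q - 1)" using a H' e1 e2 by linarith+
  ultimately show "\<exists>l::nat. l \<le> (q - 3) div 2 \<and> l * (q + 1) + 1 \<le> a \<and> a \<le> (l + 1) * (q - 1)" by blast
qed

lemma m_coset:
  fixes q n m :: nat
  assumes "n = q^2 + 1" "odd q" "m = n div 2"
  shows "cyc_coset q n m = {m}"
proof -
  have mf: "m * q mod n = m" "2 * m = n" using m_fix[OF assms] by auto
  have "n \<ge> 1" using assms(1) by simp
  then have "m < n" using mf(2) by linarith
  have "m * q^i mod n = m" for i
  proof (induction i)
    case 0 then show ?case using \<open>m < n\<close> by simp
  next
    case (Suc i)
    have "m * q^Suc i mod n = (m * q^i) * q mod n" by (simp add: ac_simps)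
    also have "\<dots> = (m * q^i mod n) * q mod n" by (simp add: mod_mult_left_eq)
    also have "\<dots> = m" using Suc mf by simp
    finally show ?case .
  qed
  then show ?thesis unfolding cyc_coset_def by auto
qed

lemma card4:
  fixes q n a :: nat
  assumes "odd q" "q \<ge> 3" "n = q^2 + 1" "0 < a" "a < n" "2 * a \<noteq> n" "a \<in> MinRep q n"
  shows "card (cyc_coset q n a) = 4"
proof -
  define x where "x = a div q"
  define y where "y = a mod q"
  have a: "a = x * q + y" unfolding x_def y_def by simp
  have yq: "y < q" unfolding y_def using assms by simp
  have H: "1 \<le> y" "2 * x + 3 \<le> q" "x + 1 \<le> y" "y + x + 1 \<le> q"
    using char[OF assms(1-6)] assms(7) unfolding x_def y_def by auto
  have bf: "a * q mod n = y * q - x" using b_formula[OF assms(3) a H(1) yq assms(5)] by auto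
  have p1: "(x + 1) * q \<le> y * q" using H mult_le_mono1 by blast
  have p2: "(y + x + 1) * q \<le> q * q" using H mult_le_mono1 by blast
  have p1': "x * q + q \<le> y * q" using p1 by (simp add: algebra_simps)
  have p2': "y * q + x * q + q \<le> q * q" using p2 by (simp add: algebra_simps)
  have n': "n = q * q + 1" using assms by (simp add: power2_eq_square)
  define b where "b = a * q mod n"
  have ab: "a < b" unfolding b_def bf using a p1' H by linarith
  have abn: "a + b < n" unfolding b_def bf using a p2' H n' p1' by linarith
  have an: "2 * a < n" using assms(6) p2' p1' a n' H by linarith
  have bq: "b * q mod n = n - a"
  proof -
    have "b * q mod n = a * q * q mod n" unfolding b_def by (simp add: mod_mult_left_eq)
    also have "\<dots> = a * q^2 mod n" by (simp add: power2_eq_square ac_simps)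
    also have "\<dots> = n - a" using sq_mod[OF assms(3,4,5)] .
    finally show ?thesis .
  qed
  have bm: "2 * b \<noteq> n"
  proof
    assume "2 * b = n"
    then have "b = n div 2" by simp
    then have "b * q mod n = b" using m_fix[OF assms(3,1)] by simp
    then show False using bq \<open>2 * b = n\<close> assms(5,6) by linarith
  qed
  have c: "cyc_coset q n a = {a, b, n - a, n - b}" unfolding b_def using coset_eq[of n q a] assms by simp
  have d: "b \<noteq> n - a" "b \<noteq> n - b" "a \<noteq> n - a" "a \<noteq> n - b" "n - a \<noteq> n - b"
    using ab abn an bm by linarith+
  show ?thesis unfolding c using ab d by (simp add: card_insert_if)
qed

theorem lemma11:
  fixes q n :: nat
  assumes "\<exists>p k. prime p \<and> k \<ge> 1 \<and> q = p ^ k"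
    and "odd q"
    and "n = q\<^sup>2 + 1"
  shows "(\<forall>a. 1 \<le> a \<and> a \<le> n - 1 \<longrightarrow>
            (a \<in> MinRep q n \<longleftrightarrow>
               a = (q\<^sup>2 + 1) div 2 \<or>
               (\<exists>l::nat. l \<le> (q - 3) div 2 \<and> l * (q + 1) + 1 \<le> a \<and> a \<le> (l + 1) * (q - 1))))
         \<and> card (cyc_coset q n ((q\<^sup>2 + 1) div 2)) = 1
         \<and> (\<forall>a \<in> MinRep q n - {0, (q\<^sup>2 + 1) div 2}. card (cyc_coset q n a) = 4)"
proof -
  obtain p k where pk: "prime p" "k \<ge> 1" "q = p ^ k" using assms(1) by blast
  have "p \<ge> 2" using pk prime_ge_2_nat by blast
  have "p \<le> p ^ k" using pk \<open>p \<ge> 2\<close> by (simp add: self_le_power)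
  then have "q \<ge> 2" using pk \<open>p \<ge> 2\<close> by simp
  then have q3: "q \<ge> 3" using assms(2) by presburger
  define m where "m = (q\<^sup>2 + 1) div 2"
  have mn: "m = n div 2" unfolding m_def using assms(3) by simp
  have mf: "m * q mod n = m" "2 * m = n" using m_fix[OF assms(3,2) mn] by auto
  have n1: "n \<ge> 1" using assms(3) by simp
  have P1: "\<forall>a. 1 \<le> a \<and> a \<le> n - 1 \<longrightarrow>
            (a \<in> MinRep q n \<longleftrightarrow>
               a = m \<or>
               (\<exists>l::nat. l \<le> (q - 3) div 2 \<and> l * (q + 1) + 1 \<le> a \<and> a \<le> (l + 1) * (q - 1)))"
  proof (intro allI impI)
    fix a assume a: "1 \<le> a \<and> a \<le> n - 1"
    then have a0: "0 < a" "a < n" using n1 by auto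
    show "a \<in> MinRep q n \<longleftrightarrow> a = m \<or>
               (\<exists>l::nat. l \<le> (q - 3) div 2 \<and> l * (q + 1) + 1 \<le> a \<and> a \<le> (l + 1) * (q - 1))"
    proof (cases "a = m")
      case True
      have "a \<in> MinRep q n" using leader_iff[OF assms(3) _ a0] q3 True mf by simp
      then show ?thesis using True by simp
    next
      case False
      then have "2 * a \<noteq> n" using mf by linarith
      then show ?thesis using char[OF assms(2) q3 assms(3) a0] interval_iff[OF assms(2) q3, of a] False by simp
    qed
  qed
  have P2: "card (cyc_coset q n m) = 1" using m_coset[OF assms(3,2) mn] by simp
  have P3: "\<forall>a \<in> MinRep q n - {0, m}. card (cyc_coset q n a) = 4"
  proof
    fix a assume a: "a \<in> MinRep q n - {0, m}"
    then have "0 < a" "a < n" "a \<in> MinRep q n" "a \<noteq> m" unfolding MinRep_def by auto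
    moreover have "2 * a \<noteq> n" using \<open>a \<noteq> m\<close> mf by linarith
    ultimately show "card (cyc_coset q n a) = 4" using card4[OF assms(2) q3 assms(3)] by blast
  qed
  show ?thesis using P1 P2 P3 unfolding m_def by blast
qed

end
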